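(* For every odd integer $k\ge 5$, the graph $F_1(k)$ is word-representable.
   Context: For odd $k\ge5$, $F_1(k)$ is the split graph with clique $C=\{c_1,\dots,c_{k-1}\}$ and independent set $I=\{b_1,b_2,a_1,\dots,a_{k-2}\}$, where $N(b_1)=\{c_1,\dots,c_{k-2}\}$, $N(b_2)=\{c_2,\dots,c_{k-1}\}$, and $N(a_i)=\{c_i,c_{i+1}\}$ for $1\le i\le k-2$. A graph $G=(V,E)$ is word-representable if there is a word $w$ over $V$ such that for all distinct $a,b\in V$, $ab\in E$ iff $a$ and $b$ alternate in $w$ (i.e. the subsequence of $w$ formed by all occurrences of $a$ and $b$ is $abab\cdots$ or $baba\cdots$). *)

theory Defs
  imports Main
begin

text \<open>Simple graphs given by a vertex set and an edge predicate (assumed symmetric).\<close>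

definition alternate_in :: "'a list \<Rightarrow> 'a \<Rightarrow> 'a \<Rightarrow> bool" where
  "alternate_in w a b \<longleftrightarrow>
     (let s = filter (\<lambda>x. x = a \<or> x = b) w
      in \<forall>i. Suc i < length s \<longrightarrow> s ! i \<noteq> s ! Suc i)"

definition word_represents :: "'a list \<Rightarrow> 'a set \<Rightarrow> ('a \<Rightarrow> 'a \<Rightarrow> bool) \<Rightarrow> bool" where
  "word_represents w V E \<longleftrightarrow> set w = V \<and>
     (\<forall>a\<in>V. \<forall>b\<in>V. a \<noteq> b \<longrightarrow> (E a b \<longleftrightarrow> alternate_in w a b))"

definition word_representable :: "'a set \<Rightarrow> ('a \<Rightarrow> 'a \<Rightarrow> bool) \<Rightarrow> bool" where
  "word_representable V E \<longleftrightarrow> (\<exists>w. word_represents w V E)"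

text \<open>Vertices of F_1(k): clique vertices c_i, independent vertices b_1, b_2, a_i.\<close>
datatype fvert = C nat | B1 | B2 | A nat

definition F1_vertices :: "nat \<Rightarrow> fvert set" where
  "F1_vertices k = C ` {1..k-1} \<union> {B1, B2} \<union> A ` {1..k-2}"

fun F1_adj :: "nat \<Rightarrow> fvert \<Rightarrow> fvert \<Rightarrow> bool" where
  "F1_adj k (C i) (C j) = (i \<noteq> j)"
| "F1_adj k B1 (C j) = (1 \<le> j \<and> j \<le> k - 2)"
| "F1_adj k (C j) B1 = (1 \<le> j \<and> j \<le> k - 2)"
| "F1_adj k B2 (C j) = (2 \<le> j \<and> j \<le> k - 1)"
| "F1_adj k (C j) B2 = (2 \<le> j \<and> j \<le> k - 1)"
| "F1_adj k (A i) (C j) = (j = i \<or> j = i + 1)"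
| "F1_adj k (C j) (A i) = (j = i \<or> j = i + 1)"
| "F1_adj k _ _ = False"

end

theory Submission imports Defs begin

definition blk :: "nat \<Rightarrow> fvert list" where "blk i = [A i, C i, C (Suc i), A i]"
definition OB :: "nat \<Rightarrow> nat \<Rightarrow> fvert list" where
  "OB a b = concat (map (\<lambda>j. blk (2*j+1)) [a..<b])"
definition EB :: "nat \<Rightarrow> nat \<Rightarrow> fvert list" where
  "EB a b = concat (map (\<lambda>j. blk (2*j+2)) [a..<b])"
definition W :: "nat \<Rightarrow> fvert list" where
  "W t = OB 0 t @ [A (2*t+1), C (2*t+1), B1, C (2*t+2), A (2*t+1), C 1, B2] @ EB 0 t
     @ [C (2*t+2), B2, A (2*t+1)]"

fun isC :: "fvert \<Rightarrow> bool" where "isC (C _) = True" | "isC _ = False"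

fun altl :: "'a list \<Rightarrow> bool" where
  "altl (x#y#r) = (x \<noteq> y \<and> altl (y#r))" | "altl _ = True"

lemma altl_nth: "altl s \<longleftrightarrow> (\<forall>i. Suc i < length s \<longrightarrow> s!i \<noteq> s!Suc i)"
proof (induction s rule: altl.induct)
  case (1 x y r)
  show ?case
  proof
    assume h: "altl (x#y#r)"
    show "\<forall>i. Suc i < length (x#y#r) \<longrightarrow> (x#y#r)!i \<noteq> (x#y#r)!Suc i"
    proof (intro allI impI)
      fix i assume "Suc i < length (x#y#r)"
      then show "(x#y#r)!i \<noteq> (x#y#r)!Suc i" using h 1 by (cases i) auto
    qed
  next
    assume h: "\<forall>i. Suc i < length (x#y#r) \<longrightarrow> (x#y#r)!i \<noteq> (x#y#r)!Suc i"
    have "x \<noteq> y" using h[rule_format, of 0] by simp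
    moreover have "\<forall>i. Suc i < length (y#r) \<longrightarrow> (y#r)!i \<noteq> (y#r)!Suc i"
      using h by (metis Suc_less_eq length_Cons nth_Cons_Suc)
    ultimately show "altl (x#y#r)" using 1 by simp
  qed
qed auto

lemma alt_altl: "alternate_in w a b \<longleftrightarrow> altl (filter (\<lambda>x. x = a \<or> x = b) w)"
  unfolding alternate_in_def Let_def altl_nth by simp

lemma alt_sym: "alternate_in w a b \<longleftrightarrow> alternate_in w b a"
  unfolding alt_altl by (metis (no_types, lifting) filter_cong)

lemma filt_C: "(\<forall>v\<in>set xs. P v \<longrightarrow> isC v) \<Longrightarrow> filter P xs = filter P (filter isC xs)"
  by (induct xs) auto

lemma filter_eq_upt: "filter (\<lambda>y. y = l) [a..<b] = (if a \<le> l \<and> l < b then [l] else [])"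
  by (induct b) auto

lemma filter_eq2_upt: "i < j \<Longrightarrow> filter (\<lambda>y. y = i \<or> y = j) [a..<b] =
   (if a \<le> i \<and> i < b then [i] else []) @ (if a \<le> j \<and> j < b then [j] else [])"
  by (induct b) auto

lemma OB_C: "filter isC (OB a b) = map C [2*a+1..<2*b+1]"
proof (induct b)
  case 0 then show ?case by (simp add: OB_def)
next
  case (Suc b)
  show ?case
  proof (cases "a \<le> b")
    case True
    have "[2*a+1..<2*Suc b+1] = [2*a+1..<2*b+1] @ [2*b+1, 2*b+2]"
      using True by (simp add: upt_Suc_append[symmetric])
    then show ?thesis using Suc True by (simp add: OB_def blk_def)
  next
    case False then show ?thesis by (simp add: OB_def)
  qed
qed

lemma EB_C: "filter isC (EB a b) = map C [2*a+2..<2*b+2]"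
proof (induct b)
  case 0 then show ?case by (simp add: EB_def)
next
  case (Suc b)
  show ?case
  proof (cases "a \<le> b")
    case True
    have "[2*a+2..<2*Suc b+2] = [2*a+2..<2*b+2] @ [2*b+2, 2*b+3]"
      using True by (simp add: upt_Suc_append[symmetric])
    then show ?thesis using Suc True by (simp add: EB_def blk_def)
  next
    case False then show ?thesis by (simp add: EB_def)
  qed
qed

lemma set_OB: "set (OB a b) = (\<Union>j\<in>{a..<b}. {A (2*j+1), C (2*j+1), C (2*j+2)})"
  by (auto simp: OB_def blk_def)
lemma set_EB: "set (EB a b) = (\<Union>j\<in>{a..<b}. {A (2*j+2), C (2*j+2), C (2*j+3)})"
  by (auto simp: EB_def blk_def)

lemma OB_split: "j < b \<Longrightarrow> a \<le> j \<Longrightarrow> OB a b = OB a j @ blk (2*j+1) @ OB (Suc j) b"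
proof -
  assume "j < b" "a \<le> j"
  then have "[a..<b] = [a..<j] @ j # [Suc j..<b]" by (metis upt_add_eq_append le_add_diff_inverse less_imp_le upt_conv_Cons)
  then show ?thesis unfolding OB_def by simp
qed
lemma EB_split: "j < b \<Longrightarrow> a \<le> j \<Longrightarrow> EB a b = EB a j @ blk (2*j+2) @ EB (Suc j) b"
proof -
  assume "j < b" "a \<le> j"
  then have "[a..<b] = [a..<j] @ j # [Suc j..<b]" by (metis upt_add_eq_append le_add_diff_inverse less_imp_le upt_conv_Cons)
  then show ?thesis unfolding EB_def by simp
qed

lemma fCl: "filter (\<lambda>v. v = C l) (map C xs) = map C (filter (\<lambda>y. y=l) xs)"
  by (induct xs) auto

lemma pieceC: "\<not> isC x \<Longrightarrow> x \<notin> set xs \<Longrightarrow>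
   filter (\<lambda>v. v = x \<or> v = C l) xs = filter (\<lambda>v. v = C l) (filter isC xs)"
  by (induct xs) auto

lemma W_C: "filter isC (W t) = map C [1..<2*t+3] @ map C [1..<2*t+3]"
proof -
  have e1: "[1..<2*t+3] = [1..<2*t+1] @ [2*t+1, 2*t+2]"
    by (simp add: upt_Suc_append[symmetric] numeral_3_eq_3)
  have e3: "2*t+3 = Suc (2*t+2)" by simp
  have e2: "[1..<2*t+3] = 1 # [2..<2*t+2] @ [2*t+2]"
  proof -
    have "(1::nat) \<le> 2*t+2" by simp
    then have "[1..<Suc (2*t+2)] = [1..<2*t+2] @ [2*t+2]" by (rule upt_Suc_append)
    moreover have "[1..<2*t+2] = 1 # [2..<2*t+2]" by (simp add: upt_conv_Cons numeral_2_eq_2)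
    ultimately show ?thesis unfolding e3 by simp
  qed
  have "filter isC (W t) = map C [1..<2*t+1] @ [C (2*t+1), C (2*t+2), C 1] @ map C [2..<2*t+2] @ [C (2*t+2)]"
    using EB_C[of 0 t, unfolded mult_0_right add_0_left] OB_C[of 0 t, unfolded mult_0_right add_0_left] by (simp add: W_def del: upt_Suc)
  also have "\<dots> = map C ([1..<2*t+1] @ [2*t+1, 2*t+2]) @ map C (1 # [2..<2*t+2] @ [2*t+2])"
    by simp
  also have "\<dots> = map C [1..<2*t+3] @ map C [1..<2*t+3]"
    by (simp only: e1[symmetric] e2[symmetric])
  finally show ?thesis .
qed

lemma CC: "i < j \<Longrightarrow> 1 \<le> i \<Longrightarrow> j \<le> 2*t+2 \<Longrightarrow> alternate_in (W t) (C i) (C j)"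
  apply (simp add: alt_altl)
  apply (subst filt_C, force)
  apply (simp add: W_C filter_map comp_def filter_eq2_upt)
  done

lemma A_odd: "j < t \<Longrightarrow> 1 \<le> l \<Longrightarrow> l \<le> 2*t+2 \<Longrightarrow>
   alternate_in (W t) (A (2*j+1)) (C l) \<longleftrightarrow> (l = 2*j+1 \<or> l = 2*j+2)"
proof -
  assume h: "j < t" "1 \<le> l" "l \<le> 2*t+2"
  have W: "W t = OB 0 j @ blk (2*j+1) @ OB (Suc j) t @
     [A (2*t+1), C (2*t+1), B1, C (2*t+2), A (2*t+1), C 1, B2] @ EB 0 t @ [C (2*t+2), B2, A (2*t+1)]"
    using h by (simp add: W_def OB_split[of j t 0])
  have n1: "A (2*j+1) \<notin> set (OB 0 j)" "A (2*j+1) \<notin> set (OB (Suc j) t)" "A (2*j+1) \<notin> set (EB 0 t)"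
    by (auto simp: set_OB set_EB) presburger
  show ?thesis
    unfolding alt_altl W
    apply (simp only: filter_append pieceC[OF _ n1(1)] pieceC[OF _ n1(2)] pieceC[OF _ n1(3)] isC.simps simp_thms)
    using h by (auto simp: OB_C EB_C fCl filter_eq_upt blk_def)
qed

lemma A_even: "j < t \<Longrightarrow> 1 \<le> l \<Longrightarrow> l \<le> 2*t+2 \<Longrightarrow>
   alternate_in (W t) (A (2*j+2)) (C l) \<longleftrightarrow> (l = 2*j+2 \<or> l = 2*j+3)"
proof -
  assume h: "j < t" "1 \<le> l" "l \<le> 2*t+2"
  have W: "W t = OB 0 t @
     [A (2*t+1), C (2*t+1), B1, C (2*t+2), A (2*t+1), C 1, B2] @ EB 0 j @ blk (2*j+2) @ EB (Suc j) t @ [C (2*t+2), B2, A (2*t+1)]"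
    using h by (simp add: W_def EB_split[of j t 0])
  have n1: "A (2*j+2) \<notin> set (OB 0 t)" "A (2*j+2) \<notin> set (EB 0 j)" "A (2*j+2) \<notin> set (EB (Suc j) t)"
    by (auto simp: set_OB set_EB) presburger
  show ?thesis
    unfolding alt_altl W
    apply (simp only: filter_append pieceC[OF _ n1(1)] pieceC[OF _ n1(2)] pieceC[OF _ n1(3)] isC.simps simp_thms)
    using h by (auto simp: OB_C EB_C fCl filter_eq_upt blk_def)
qed

lemma notin_OB: "A (2*t+1) \<notin> set (OB 0 t)" "A (2*t+1) \<notin> set (EB 0 t)"
  "B1 \<notin> set (OB a b)" "B2 \<notin> set (OB a b)" "B1 \<notin> set (EB a b)" "B2 \<notin> set (EB a b)"
  by (auto simp: set_OB set_EB)

lemma A_n: "1 \<le> l \<Longrightarrow> l \<le> 2*t+2 \<Longrightarrow>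
   alternate_in (W t) (A (2*t+1)) (C l) \<longleftrightarrow> (l = 2*t+1 \<or> l = 2*t+2)"
  unfolding alt_altl W_def
  apply (simp only: filter_append pieceC[OF _ notin_OB(1)] pieceC[OF _ notin_OB(2)] isC.simps simp_thms)
  by (auto simp: OB_C EB_C fCl filter_eq_upt)

lemma B1C: "1 \<le> l \<Longrightarrow> l \<le> 2*t+2 \<Longrightarrow>
   alternate_in (W t) B1 (C l) \<longleftrightarrow> l \<le> 2*t+1"
  unfolding alt_altl W_def
  apply (simp only: filter_append pieceC[OF _ notin_OB(3)] pieceC[OF _ notin_OB(5)] isC.simps simp_thms)
  by (auto simp: OB_C EB_C fCl filter_eq_upt)

lemma B2C: "1 \<le> l \<Longrightarrow> l \<le> 2*t+2 \<Longrightarrow>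
   alternate_in (W t) B2 (C l) \<longleftrightarrow> 2 \<le> l"
  unfolding alt_altl W_def
  apply (simp only: filter_append pieceC[OF _ notin_OB(4)] pieceC[OF _ notin_OB(6)] isC.simps simp_thms)
  by (auto simp: OB_C EB_C fCl filter_eq_upt)

lemma altl_app: "altl (xs @ ys) \<Longrightarrow> altl ys"
proof (induct xs)
  case (Cons x xs)
  then show ?case by (cases xs; cases ys) auto
qed simp

lemma nonalt: "w = u @ [a] @ v @ [a] @ z \<Longrightarrow> a \<notin> set v \<Longrightarrow> b \<notin> set v \<Longrightarrow>
   \<not> alternate_in w a b"
proof -
  assume h: "w = u @ [a] @ v @ [a] @ z" "a \<notin> set v" "b \<notin> set v"
  have "filter (\<lambda>x. x = a \<or> x = b) v = []" using h(2,3) by (auto simp: filter_empty_conv)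
  then have "filter (\<lambda>x. x = a \<or> x = b) w = filter (\<lambda>x. x = a \<or> x = b) u @ a # a # filter (\<lambda>x. x = a \<or> x = b) z"
    using h(1) by simp
  then show ?thesis unfolding alt_altl by (metis altl.simps(1) altl_app)
qed

lemma A_small: "1 \<le> i \<Longrightarrow> i \<le> 2*t \<Longrightarrow> \<not> isC b \<Longrightarrow> \<not> alternate_in (W t) (A i) b"
proof -
  assume h: "1 \<le> i" "i \<le> 2*t" "\<not> isC b"
  have bC: "b \<notin> set [C i, C (Suc i)]" using h(3) by auto
  have "(i-1) div 2 < t \<and> (i = 2*((i-1) div 2)+1 \<or> i = 2*((i-1) div 2)+2)" using h(1,2) by presburger
  then obtain j where j: "j < t" "i = 2*j+1 \<or> i = 2*j+2" by blast
  from j(2) show ?thesis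
  proof
    assume e: "i = 2*j+1"
    have "W t = OB 0 j @ [A i] @ [C i, C (Suc i)] @ [A i] @ (OB (Suc j) t @
     [A (2*t+1), C (2*t+1), B1, C (2*t+2), A (2*t+1), C 1, B2] @ EB 0 t @ [C (2*t+2), B2, A (2*t+1)])"
      using j(1) e by (simp add: W_def OB_split[of j t 0] blk_def)
    then show ?thesis by (rule nonalt) (use bC in auto)
  next
    assume e: "i = 2*j+2"
    have "W t = (OB 0 t @
     [A (2*t+1), C (2*t+1), B1, C (2*t+2), A (2*t+1), C 1, B2] @ EB 0 j) @ [A i] @ [C i, C (Suc i)] @ [A i] @ (EB (Suc j) t @ [C (2*t+2), B2, A (2*t+1)])"
      using j(1) e by (simp add: W_def EB_split[of j t 0] blk_def)
    then show ?thesis by (rule nonalt) (use bC in auto)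
  qed
qed

lemma An_B1: "\<not> alternate_in (W t) (A (2*t+1)) B1"
  apply (rule nonalt[where u = "OB 0 t @ [A (2*t+1), C (2*t+1), B1, C (2*t+2)]"
     and v = "[C 1, B2] @ EB 0 t @ [C (2*t+2), B2]" and z = "[]"])
  using notin_OB by (auto simp: W_def)

lemma An_B2: "\<not> alternate_in (W t) (A (2*t+1)) B2"
  apply (rule nonalt[where u = "OB 0 t" and v = "[C (2*t+1), B1, C (2*t+2)]"
      and z = "[C 1, B2] @ EB 0 t @ [C (2*t+2), B2, A (2*t+1)]"])
  by (auto simp: W_def)

lemma B2_B1: "\<not> alternate_in (W t) B2 B1"
  apply (rule nonalt[where u = "OB 0 t @ [A (2*t+1), C (2*t+1), B1, C (2*t+2), A (2*t+1), C 1]"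
      and v = "EB 0 t @ [C (2*t+2)]" and z = "[A (2*t+1)]"])
  using notin_OB by (auto simp: W_def)

definition V where "V t = C ` {1..2*t+2} \<union> {B1, B2} \<union> A ` {1..2*t+1}"

lemma cover: "\<not> isC x \<Longrightarrow> x \<in> V t \<Longrightarrow>
   x = B1 \<or> x = B2 \<or> x = A (2*t+1) \<or> (\<exists>i. x = A i \<and> 1 \<le> i \<and> i \<le> 2*t)"
  by (auto simp: V_def)

lemma IND: "x \<in> V t \<Longrightarrow> y \<in> V t \<Longrightarrow> \<not> isC x \<Longrightarrow> \<not> isC y \<Longrightarrow> x \<noteq> y \<Longrightarrow>
   \<not> alternate_in (W t) x y"
proof -
  assume h: "x \<in> V t" "y \<in> V t" "\<not> isC x" "\<not> isC y" "x \<noteq> y"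
  show ?thesis
  proof (cases "\<exists>i. x = A i \<and> 1 \<le> i \<and> i \<le> 2*t")
    case True
    then show ?thesis using A_small h(4) by blast
  next
    case F1: False
    show ?thesis
    proof (cases "\<exists>i. y = A i \<and> 1 \<le> i \<and> i \<le> 2*t")
      case True
      then show ?thesis using A_small h(3) alt_sym by metis
    next
      case False
      have "x = B1 \<or> x = B2 \<or> x = A (2*t+1)" using cover[OF h(3,1)] F1 by blast
      moreover have "y = B1 \<or> y = B2 \<or> y = A (2*t+1)" using cover[OF h(4,2)] False by blast
      ultimately show ?thesis using h(5) An_B1 An_B2 B2_B1 alt_sym by metis
    qed
  qed
qed

lemma XC: "\<not> isC x \<Longrightarrow> x \<in> V t \<Longrightarrow> 1 \<le> l \<Longrightarrow> l \<le> 2*t+2 \<Longrightarrow>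
   alternate_in (W t) x (C l) \<longleftrightarrow> F1_adj (2*t+3) x (C l)"
proof -
  assume h: "\<not> isC x" "x \<in> V t" "1 \<le> l" "l \<le> 2*t+2"
  have "x = B1 \<or> x = B2 \<or> x = A (2*t+1) \<or> (\<exists>i. x = A i \<and> 1 \<le> i \<and> i \<le> 2*t)"
    using cover[OF h(1,2)] .
  moreover
  { assume "x = B1" then have ?thesis using B1C[OF h(3,4)] h by simp }
  moreover
  { assume "x = B2" then have ?thesis using B2C[OF h(3,4)] h by simp }
  moreover
  { assume "x = A (2*t+1)" then have ?thesis using A_n[OF h(3,4)] by auto }
  moreover
  { fix i assume x: "x = A i" "1 \<le> i" "i \<le> 2*t"
    have "(i-1) div 2 < t \<and> (i = 2*((i-1) div 2)+1 \<or> i = 2*((i-1) div 2)+2)" using x by presburger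
    then obtain j where j: "j < t" "i = 2*j+1 \<or> i = 2*j+2" by blast
    from j(2) have ?thesis
    proof
      assume "i = 2*j+1" then show ?thesis using A_odd[OF j(1) h(3,4)] x by auto
    next
      assume "i = 2*j+2" then show ?thesis using A_even[OF j(1) h(3,4)] x by auto
    qed }
  ultimately show ?thesis by blast
qed

lemma set_W: "set (W t) = V t"
proof
  show "set (W t) \<subseteq> V t"
    by (auto simp: W_def V_def set_OB set_EB)
next
  show "V t \<subseteq> set (W t)"
  proof
    fix x assume x: "x \<in> V t"
    show "x \<in> set (W t)"
    proof (cases "x = B1 \<or> x = B2 \<or> x = A (2*t+1) \<or> x = C (2*t+1) \<or> x = C (2*t+2)")
      case True then show ?thesis by (auto simp: W_def)
    next
      case False
      have "\<exists>i. (x = A i \<or> x = C i) \<and> 1 \<le> i \<and> i \<le> 2*t"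
      proof -
        consider (c) i where "x = C i" "1 \<le> i" "i \<le> 2*t+2" | "x = B1" | "x = B2"
          | (a) i where "x = A i" "1 \<le> i" "i \<le> 2*t+1"
          using x unfolding V_def by (auto simp del: One_nat_def)
        then show ?thesis
        proof cases
          case c
          then have "i \<noteq> 2*t+1" "i \<noteq> 2*t+2" using False by auto
          then have "i \<le> 2*t" using c by linarith
          then show ?thesis using c by blast
        next
          case a
          then have "i \<noteq> 2*t+1" using False by auto
          then have "i \<le> 2*t" using a by linarith
          then show ?thesis using a by blast
        qed (use False in auto)
      qed
      then obtain i where i: "x = A i \<or> x = C i" "1 \<le> i" "i \<le> 2*t" by blast
      have "(i-1) div 2 < t \<and> (i = 2*((i-1) div 2)+1 \<or> i = 2*((i-1) div 2)+2)" using i(2,3) by presburger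
      then obtain j where j: "j < t" "i = 2*j+1 \<or> i = 2*j+2" by blast
      then have "x \<in> set (OB 0 t) \<or> x \<in> set (EB 0 t)" using i(1) by (auto simp: set_OB set_EB)
      then show ?thesis by (auto simp: W_def)
    qed
  qed
qed

theorem main_t: "word_representable (V t) (F1_adj (2*t+3))"
  unfolding word_representable_def word_represents_def
proof (intro exI conjI ballI impI)
  show "set (W t) = V t" by (rule set_W)
  fix a b assume a: "a \<in> V t" and b: "b \<in> V t" and ne: "a \<noteq> b"
  show "F1_adj (2*t+3) a b \<longleftrightarrow> alternate_in (W t) a b"
  proof (cases "isC a")
    case aC: True
    then obtain i where i: "a = C i" by (cases a) auto
    have ir: "1 \<le> i" "i \<le> 2*t+2" using a i by (auto simp: V_def)
    show ?thesis
    proof (cases "isC b")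
      case True
      then obtain j where j: "b = C j" by (cases b) auto
      have jr: "1 \<le> j" "j \<le> 2*t+2" using b j by (auto simp: V_def)
      have "i \<noteq> j" using ne i j by simp
      then have "i < j \<or> j < i" by arith
      then have "alternate_in (W t) (C i) (C j)"
      proof
        assume "i < j" then show ?thesis using CC[of i j t] ir jr by simp
      next
        assume "j < i" then show ?thesis using CC[of j i t] ir jr alt_sym by metis
      qed
      then show ?thesis using i j \<open>i \<noteq> j\<close> by simp
    next
      case False
      have "alternate_in (W t) b (C i) \<longleftrightarrow> F1_adj (2*t+3) b (C i)" using XC[OF False b ir] .
      moreover have "F1_adj (2*t+3) b (C i) = F1_adj (2*t+3) (C i) b"
        using False by (cases b) auto
      ultimately show ?thesis using i alt_sym by metis
    qed
  next
    case aN: False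
    show ?thesis
    proof (cases "isC b")
      case True
      then obtain j where j: "b = C j" by (cases b) auto
      have jr: "1 \<le> j" "j \<le> 2*t+2" using b j by (auto simp: V_def)
      show ?thesis using XC[OF aN a jr] j by simp
    next
      case False
      have "\<not> F1_adj (2*t+3) a b" using aN False by (cases a; cases b) auto
      then show ?thesis using IND[OF a b aN False ne] by simp
    qed
  qed
qed

theorem lemma13:
  fixes k :: nat
  assumes "odd k" and "k \<ge> 5"
  shows "word_representable (F1_vertices k) (F1_adj k)"
proof -
  have "k = 2*((k-3) div 2)+3" using assms by presburger
  then obtain t where t: "k = 2*t+3" by blast
  have "F1_vertices k = V t" using t by (simp add: F1_vertices_def V_def)
  then show ?thesis using main_t[of t] t by simp
qed

end
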